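(* Fix an integer $k \geq 2$. For an integer $m \geq 1$ and a probability distribution $p=(p_1,\dots,p_m)$ on $\{1,\dots,m\}$, throw balls one at a time independently into $m$ bins, each landing in bin $i$ with probability $p_i$, let $T_k$ be the number of balls thrown until some bin first contains $k$ balls, and let $\|p\|_k = \left(\sum_{i=1}^m p_i^k\right)^{1/k}$. Then: (1) for all $m$ and $p$, $\|p\|_k\,\mathbb{E}\,T_k \geq c_k$, where $c_k = \int_0^\infty e^{-t^k/k!}\,dt = (k!)^{1/k}\,\Gamma(1+\tfrac{1}{k})$, and $c_k$ is the best possible such lower bound, i.e. $\inf_{m,p} \|p\|_k\,\mathbb{E}\,T_k = c_k$; (2) for all $m$ and $p$, $\|p\|_k\,\mathbb{E}\,T_k \leq k$, and $k$ is the best possible such upper bound, i.e. $\sup_{m,p} \|p\|_k\,\mathbb{E}\,T_k = k$.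
   Context: $\Gamma$ denotes the Gamma function. *)

theory Defs
  imports "HOL-Probability.Probability"
begin

text \<open>Balls are an i.i.d. stream with law p (a pmf on bins, supported in {1..m}).
  The ball with index j (0-based) lands in bin omega !! j.\<close>

definition hit_time :: "nat \<Rightarrow> nat stream \<Rightarrow> nat" where
  "hit_time k \<omega> = (LEAST n. \<exists>i. card {j. j < n \<and> \<omega> !! j = i} \<ge> k)"

definition expected_hit_time :: "nat \<Rightarrow> nat pmf \<Rightarrow> real" where
  "expected_hit_time k p =
     (\<integral>\<omega>. real (hit_time k \<omega>) \<partial>(stream_space (measure_pmf p)))"

definition lp_norm :: "nat \<Rightarrow> nat \<Rightarrow> nat pmf \<Rightarrow> real" where
  "lp_norm k m p = (\<Sum>i = 1..m. pmf p i ^ k) powr (1 / real k)"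

definition admissible_values :: "nat \<Rightarrow> real set" where
  "admissible_values k =
     {lp_norm k m p * expected_hit_time k p | m p. m \<ge> 1 \<and> set_pmf p \<subseteq> {1..m}}"

end

theory Submission
  imports Defs "HOL-Computational_Algebra.Polynomial"
begin


definition ek :: "nat \<Rightarrow> real \<Rightarrow> real" where
  "ek n x = (\<Sum>j<n. x ^ j / fact j)"

definition QQ :: "nat \<Rightarrow> real \<Rightarrow> real" where
  "QQ n x = exp (- x) * ek n x"

lemma ek_Suc: "ek (Suc n) x = ek n x + x ^ n / fact n"
  by (simp add: ek_def)

lemma ek_0 [simp]: "ek 0 x = 0" by (simp add: ek_def)

lemma ek_nonneg: "x \<ge> 0 \<Longrightarrow> ek n x \<ge> 0"
  unfolding ek_def by (intro sum_nonneg) auto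

lemma ek_ge1: "n \<ge> 1 \<Longrightarrow> x \<ge> 0 \<Longrightarrow> ek n x \<ge> 1"
proof (induction n)
  case 0 then show ?case by simp
next
  case (Suc n)
  show ?case
  proof (cases "n = 0")
    case True then show ?thesis by (simp add: ek_def)
  next
    case False
    then have "ek n x \<ge> 1" using Suc by auto
    moreover have "x ^ n / fact n \<ge> 0" using Suc by auto
    ultimately show ?thesis by (simp add: ek_Suc)
  qed
qed

lemma ek_at0: "ek (Suc n) 0 = 1"
  by (induction n) (auto simp: ek_Suc)

lemma ek_deriv: "(ek (Suc n) has_real_derivative ek n x) (at x)"
proof (induction n)
  case 0
  then show ?case by (simp add: ek_def)
next
  case (Suc n)
  have d0: "((\<lambda>x. x ^ Suc n / fact (Suc n)) has_real_derivative (real (Suc n) * x ^ n) / fact (Suc n)) (at x)"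
    using DERIV_cdivide[OF DERIV_pow[of "Suc n" x], of "fact (Suc n)"] by simp
  have e: "(real (Suc n) * x ^ n) / fact (Suc n) = x ^ n / fact n"
    by (simp add: fact_Suc del: of_nat_Suc)
  have d: "((\<lambda>x. x ^ Suc n / fact (Suc n)) has_real_derivative x ^ n / fact n) (at x)"
    using d0 e by simp
  have f: "ek (Suc (Suc n)) = (\<lambda>x. ek (Suc n) x + x ^ Suc n / fact (Suc n))"
    by (rule ext) (simp only: ek_Suc[of "Suc n"])
  show ?case
    unfolding f using DERIV_add[OF Suc.IH d] by (simp add: ek_Suc)
qed

lemma ek_cont: "continuous_on UNIV (ek n)"
  unfolding ek_def by (intro continuous_intros) auto

lemma QQ_pos: "n \<ge> 1 \<Longrightarrow> x \<ge> 0 \<Longrightarrow> QQ n x > 0"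
  using ek_ge1[of n x] by (simp add: QQ_def)

lemma QQ_0: "n \<ge> 1 \<Longrightarrow> QQ n 0 = 1"
  using ek_at0[of "n - 1"] by (simp add: QQ_def)

lemma ln_QQ: "n \<ge> 1 \<Longrightarrow> x \<ge> 0 \<Longrightarrow> ln (QQ n x) = ln (ek n x) - x"
  using ek_ge1[of n x] by (simp add: QQ_def ln_mult)

lemma pow_fact_deriv: "((\<lambda>x. x ^ Suc n / fact (Suc n)) has_real_derivative x ^ n / fact n) (at x)"
proof -
  have d0: "((\<lambda>x. x ^ Suc n / fact (Suc n)) has_real_derivative (real (Suc n) * x ^ n) / fact (Suc n)) (at x)"
    using DERIV_cdivide[OF DERIV_pow[of "Suc n" x], of "fact (Suc n)"] by simp
  have e: "(real (Suc n) * x ^ n) / fact (Suc n) = x ^ n / fact n"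
    by (simp add: fact_Suc del: of_nat_Suc)
  show ?thesis using d0 e by simp
qed

lemma ln_ek_deriv:
  assumes "x \<ge> 0"
  shows "((\<lambda>t. ln (ek (Suc r) t)) has_real_derivative ek r x / ek (Suc r) x) (at x)"
proof -
  have pos: "ek (Suc r) x > 0" using ek_ge1[of "Suc r" x] assms by simp
  show ?thesis
    using DERIV_chain2[OF DERIV_ln_divide[OF pos] ek_deriv[of r x]] by simp
qed

lemma L1:
  assumes "n \<ge> 1" "x \<ge> 0"
  shows "exp (- (x ^ n) / fact n) \<le> QQ n x"
proof -
  obtain r where n: "n = Suc r" using assms by (cases n) auto
  let ?f = "\<lambda>t. ln (ek n t) - t + t ^ n / fact n"
  have "?f 0 \<le> ?f x"
  proof (rule DERIV_nonneg_imp_nondecreasing[OF assms(2)])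
    fix t assume t: "0 \<le> t" "t \<le> x"
    have E: "ek n t = ek r t + t ^ r / fact r" by (simp add: n ek_Suc)
    have E1: "ek n t \<ge> 1" using ek_ge1[of n t] t assms by simp
    have D: "(?f has_real_derivative (ek r t / ek n t - 1 + t ^ r / fact r)) (at t)"
      unfolding n
      by (intro DERIV_add DERIV_diff ln_ek_deriv pow_fact_deriv DERIV_ident) (use t in auto)
    have a: "t ^ r / fact r \<ge> 0" using t by simp
    have alg: "A / E - 1 + a = a * (E - 1) / E" if "E = A + a" "E \<ge> 1" for A E a :: real
      using that by (simp add: field_simps)
    have "ek r t / ek n t - 1 + t ^ r / fact r = (t ^ r / fact r) * (ek n t - 1) / ek n t"
      using alg[OF E E1] .
    also have "\<dots> \<ge> 0" using a E1 t by (intro divide_nonneg_nonneg mult_nonneg_nonneg) auto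
    finally show "\<exists>y. (?f has_real_derivative y) (at t) \<and> 0 \<le> y" using D by blast
  qed
  then have "- (x ^ n) / fact n \<le> ln (ek n x) - x"
    using assms ek_at0[of r] by (simp add: n)
  also have "\<dots> = ln (QQ n x)" using ln_QQ assms by simp
  finally show ?thesis using QQ_pos[OF assms] by (metis exp_le_cancel_iff exp_ln)
qed

lemma Hineq:
  assumes "n \<ge> 1" "x \<ge> 0"
  shows "x ^ n / (fact n * ek n x) \<le> x - ln (ek n x)"
proof -
  obtain r where n: "n = Suc r" using assms by (cases n) auto
  let ?g = "\<lambda>t. t - ln (ek n t) - (t ^ n / fact n) / ek n t"
  have "?g 0 \<le> ?g x"
  proof (rule DERIV_nonneg_imp_nondecreasing[OF assms(2)])
    fix t assume t: "0 \<le> t" "t \<le> x"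
    have E: "ek n t = ek r t + t ^ r / fact r" by (simp add: n ek_Suc)
    have E1: "ek n t \<ge> 1" using ek_ge1[of n t] t assms by simp
    have D: "(?g has_real_derivative (1 - ek r t / ek n t -
       ((t ^ r / fact r) * ek n t - (t ^ n / fact n) * ek r t) / (ek n t * ek n t))) (at t)"
      unfolding n
      by (intro DERIV_add DERIV_diff ln_ek_deriv pow_fact_deriv DERIV_ident DERIV_divide ek_deriv)
         (use t E1 n in auto)
    have b: "t ^ n / fact n \<ge> 0" "ek r t \<ge> 0" using t ek_nonneg by auto
    have alg: "1 - A / E - (a * E - b * A) / (E * E) = b * A / (E * E)" if "E = A + a" "E \<ge> 1"
      for A E a b :: real
    proof -
      have "E \<noteq> 0" using that by auto
      then have "1 - A / E - (a * E - b * A) / (E * E) = (E * E - A * E - (a * E - b * A)) / (E * E)"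
        by (simp add: field_simps)
      also have "E * E - A * E - (a * E - b * A) = b * A" using that by (simp add: algebra_simps)
      finally show ?thesis .
    qed
    have "1 - ek r t / ek n t -
       ((t ^ r / fact r) * ek n t - (t ^ n / fact n) * ek r t) / (ek n t * ek n t)
        = (t ^ n / fact n) * ek r t / (ek n t * ek n t)"
      using alg[OF E E1] .
    also have "\<dots> \<ge> 0" using b E1 t by (intro divide_nonneg_nonneg mult_nonneg_nonneg) auto
    finally show "\<exists>y. (?g has_real_derivative y) (at t) \<and> 0 \<le> y" using D by blast
  qed
  then show ?thesis
    using assms ek_at0[of r] by (simp add: n)
qed

lemma L2:
  assumes "n \<ge> 1" "0 < y" "y \<le> x"
  shows "(ln (ek n y) - y) / y ^ n \<le> (ln (ek n x) - x) / x ^ n"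
proof -
  obtain r where n: "n = Suc r" using assms by (cases n) auto
  let ?f = "\<lambda>t. (ln (ek n t) - t) / t ^ n"
  show ?thesis
  proof (rule DERIV_nonneg_imp_nondecreasing[OF assms(3)])
    fix t assume t: "y \<le> t" "t \<le> x"
    then have tp: "t > 0" using assms by auto
    have E: "ek n t = ek r t + t ^ r / fact r" by (simp add: n ek_Suc)
    have E1: "ek n t \<ge> 1" using ek_ge1[of n t] tp assms by simp
    have D: "(?f has_real_derivative
       ((ek r t / ek n t - 1) * t ^ n - (ln (ek n t) - t) * (real n * t ^ r)) / (t ^ n * t ^ n)) (at t)"
      unfolding n
      using DERIV_divide[OF DERIV_diff[OF ln_ek_deriv[of t r] DERIV_ident] DERIV_pow[of "Suc r" t]] tp
      by simp
    have alg: "(A / E - 1) * (t * P) - (L - t) * (N * P) = N * P * (t - L - (t * P) / ((N * F) * E))"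
      if "E = A + P / F" "E \<ge> 1" "N > 0" "F > 0" for A E P N F L :: real
    proof -
      have "E \<noteq> 0" "N \<noteq> 0" "F \<noteq> 0" using that by auto
      have "A / E - 1 = (A - E) / E" using \<open>E \<noteq> 0\<close> by (simp add: field_simps)
      also have "A - E = - (P / F)" using that(1) by simp
      finally have h: "A / E - 1 = - (P / F) / E" .
      have "(A / E - 1) * (t * P) = - (t * P * P) / (F * E)"
        unfolding h using \<open>E \<noteq> 0\<close> \<open>F \<noteq> 0\<close> by (simp add: field_simps)
      moreover have "N * P * ((t * P) / ((N * F) * E)) = (t * P * P) / (F * E)"
        using \<open>N \<noteq> 0\<close> by (simp add: field_simps)
      ultimately show ?thesis by (simp add: algebra_simps)
    qed
    have tn: "t ^ n = t * t ^ r" by (simp add: n)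
    have fn: "fact n = real n * fact r" by (simp add: n fact_Suc)
    have "(ek r t / ek n t - 1) * t ^ n - (ln (ek n t) - t) * (real n * t ^ r)
       = real n * t ^ r * (t - ln (ek n t) - t ^ n / (fact n * ek n t))"
      unfolding tn fn by (rule alg[OF E E1]) (auto simp: n)
    also have "\<dots> \<ge> 0"
      using Hineq[of n t] assms tp by (intro mult_nonneg_nonneg) auto
    finally show "\<exists>y. (?f has_real_derivative y) (at t) \<and> 0 \<le> y" using D by auto
  qed
qed

lemma QQ_le1: "n \<ge> 1 \<Longrightarrow> x \<ge> 0 \<Longrightarrow> QQ n x \<le> 1"
proof -
  assume a: "n \<ge> 1" "x \<ge> 0"
  have "x ^ n / (fact n * ek n x) \<ge> 0" using a ek_nonneg by auto
  then have "ln (ek n x) - x \<le> 0" using Hineq[OF a] by linarith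
  then show ?thesis using ln_QQ[OF a] QQ_pos[OF a] by (metis ln_le_zero_iff)
qed

lemma QQ_U:
  assumes "n \<ge> 1" "0 \<le> w" "w \<le> 1" "u \<ge> 0"
  shows "QQ n (w * u) \<le> QQ n u powr (w ^ n)"
proof (cases "w = 0 \<or> u = 0")
  case True
  then show ?thesis using QQ_0[OF assms(1)] QQ_pos[OF assms(1,4)] assms by (auto simp: power_0_left)
next
  case False
  then have wp: "w > 0" and up: "u > 0" using assms by auto
  have yx: "w * u \<le> u" using assms up by (simp add: mult_le_cancel_right1)
  have "(ln (ek n (w*u)) - w*u) / (w*u) ^ n \<le> (ln (ek n u) - u) / u ^ n"
    by (rule L2) (use assms wp up yx in auto)
  then have "ln (ek n (w*u)) - w*u \<le> (ln (ek n u) - u) / u ^ n * (w*u) ^ n"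
    using wp up by (simp add: divide_le_eq)
  also have "\<dots> = w ^ n * (ln (ek n u) - u)"
    using up by (simp add: power_mult_distrib field_simps)
  finally have "ln (QQ n (w*u)) \<le> w ^ n * ln (QQ n u)"
    using ln_QQ assms wp up by simp
  then have "exp (ln (QQ n (w*u))) \<le> exp (w ^ n * ln (QQ n u))" by simp
  moreover have "QQ n (w*u) > 0" "QQ n u > 0" using QQ_pos assms wp up by auto
  ultimately show ?thesis by (simp add: powr_def)
qed

lemma QQ_Up:
  assumes "n \<ge> 1" "y \<ge> 0"
  shows "QQ n y \<le> exp (- (y ^ n) / (fact n * ek n y))"
proof -
  have "ln (QQ n y) \<le> - (y ^ n) / (fact n * ek n y)"
    using Hineq[OF assms] ln_QQ[OF assms] by simp
  then show ?thesis using QQ_pos[OF assms] by (metis exp_le_cancel_iff exp_ln)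
qed



definition Ep :: "nat \<Rightarrow> real \<Rightarrow> real poly" where
  "Ep n a = (\<Sum>j<n. monom (a ^ j / fact j) j)"

definition Lf :: "real poly \<Rightarrow> real" where
  "Lf P = (\<Sum>i\<le>degree P. coeff P i * fact i)"

lemma Lf_bound:
  assumes "degree P \<le> N"
  shows "Lf P = (\<Sum>i\<le>N. coeff P i * fact i)"
  unfolding Lf_def
  by (rule sum.mono_neutral_left) (use assms in \<open>auto simp: coeff_eq_0\<close>)

lemma Lf_0 [simp]: "Lf 0 = 0" by (simp add: Lf_def)

lemma Lf_add: "Lf (P + Q) = Lf P + Lf Q"
proof -
  let ?N = "max (degree P) (degree Q)"
  have "Lf (P + Q) = (\<Sum>i\<le>?N. coeff (P + Q) i * fact i)"
    by (rule Lf_bound) (simp add: degree_add_le)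
  also have "\<dots> = (\<Sum>i\<le>?N. coeff P i * fact i) + (\<Sum>i\<le>?N. coeff Q i * fact i)"
    by (simp add: sum.distrib distrib_right)
  also have "\<dots> = Lf P + Lf Q"
    by (simp add: Lf_bound[symmetric])
  finally show ?thesis .
qed

lemma Lf_smult: "Lf (smult a P) = a * Lf P"
proof -
  have "Lf (smult a P) = (\<Sum>i\<le>degree P. coeff (smult a P) i * fact i)"
    by (rule Lf_bound) (simp add: degree_smult_le)
  then show ?thesis by (simp add: Lf_def sum_distrib_left mult.assoc)
qed

lemma Lf_sum: "Lf (\<Sum>i\<in>A. f i) = (\<Sum>i\<in>A. Lf (f i))"
  by (induction A rule: infinite_finite_induct) (auto simp: Lf_add)

lemma Lf_pderiv: "Lf P = coeff P 0 + Lf (pderiv P)"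
proof -
  let ?D = "degree P"
  have "Lf (pderiv P) = (\<Sum>i\<le>?D. coeff (pderiv P) i * fact i)"
    by (rule Lf_bound) (simp add: degree_pderiv)
  also have "\<dots> = (\<Sum>i\<le>?D. coeff P (Suc i) * fact (Suc i))"
    by (rule sum.cong) (auto simp: coeff_pderiv fact_Suc)
  finally have 1: "Lf (pderiv P) = (\<Sum>i\<le>?D. coeff P (Suc i) * fact (Suc i))" .
  have "Lf P = (\<Sum>i\<le>Suc ?D. coeff P i * fact i)"
    by (rule Lf_bound) simp
  also have "\<dots> = coeff P 0 + (\<Sum>i\<le>?D. coeff P (Suc i) * fact (Suc i))"
    by (subst sum.atMost_Suc_shift) simp
  finally show ?thesis using 1 by simp
qed

lemma Ep_0 [simp]: "Ep 0 a = 0" by (simp add: Ep_def)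

lemma poly_Ep: "poly (Ep n a) t = ek n (a * t)"
  by (simp add: Ep_def ek_def poly_sum poly_monom power_mult_distrib)

lemma coeff_Ep: "coeff (Ep n a) i = (if i < n then a ^ i / fact i else 0)"
  by (simp add: Ep_def coeff_sum coeff_monom)

lemma pderiv_sum': "pderiv (\<Sum>i\<in>A. f i) = (\<Sum>i\<in>A. pderiv (f i))"
  by (induction A rule: infinite_finite_induct) (auto simp: pderiv_add)

lemma pderiv_Ep: "pderiv (Ep (Suc n) a) = smult a (Ep n a)"
proof -
  have "pderiv (Ep (Suc n) a) = (\<Sum>j<Suc n. monom (of_nat j * (a ^ j / fact j)) (j - 1))"
    unfolding Ep_def pderiv_sum' by (simp add: pderiv_monom del: sum.lessThan_Suc)
  also have "\<dots> = (\<Sum>j<n. monom (of_nat (Suc j) * (a ^ Suc j / fact (Suc j))) j)"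
    by (subst sum.lessThan_Suc_shift) simp
  also have "\<dots> = (\<Sum>j<n. smult a (monom (a ^ j / fact j) j))"
  proof (rule sum.cong)
    fix j
    have "of_nat (Suc j) * (a ^ Suc j / fact (Suc j)) = a * (a ^ j / fact j)"
      by (simp add: fact_Suc del: of_nat_Suc)
    then show "monom (of_nat (Suc j) * (a ^ Suc j / fact (Suc j))) j = smult a (monom (a ^ j / fact j) j)"
      by (simp add: smult_monom)
  qed simp
  also have "\<dots> = smult a (Ep n a)"
    unfolding Ep_def by (induction n) (auto simp: smult_add_right)
  finally show ?thesis .
qed

definition nncoeff :: "real poly \<Rightarrow> bool" where
  "nncoeff P \<longleftrightarrow> (\<forall>i. coeff P i \<ge> 0)"

lemma nncoeff_mult: "nncoeff P \<Longrightarrow> nncoeff Q \<Longrightarrow> nncoeff (P * Q)"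
  unfolding nncoeff_def coeff_mult by (auto intro!: sum_nonneg mult_nonneg_nonneg)

lemma nncoeff_prod: "(\<And>i. i \<in> A \<Longrightarrow> nncoeff (f i)) \<Longrightarrow> nncoeff (\<Prod>i\<in>A. f i)"
proof (induction A rule: infinite_finite_induct)
  case (insert x F)
  then have "nncoeff (f x * prod f F)" by (intro nncoeff_mult) auto
  then show ?case using insert by simp
qed (auto simp: nncoeff_def coeff_1)

lemma nncoeff_Ep: "a \<ge> 0 \<Longrightarrow> nncoeff (Ep n a)"
  by (simp add: nncoeff_def coeff_Ep)

definition Fp :: "nat \<Rightarrow> nat set \<Rightarrow> (nat \<Rightarrow> real) \<Rightarrow> (nat \<Rightarrow> nat) \<Rightarrow> real poly" where
  "Fp k A q c = (\<Prod>i\<in>A. Ep (k - c i) (q i))"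

lemma Fp_zero:
  assumes "finite A" "i \<in> A" "k \<le> c i" shows "Fp k A q c = 0"
proof -
  have "k - c i = 0" using assms by simp
  then have z: "Ep (k - c i) (q i) = 0" by simp
  show ?thesis unfolding Fp_def by (rule prod_zero[OF assms(1)]) (rule bexI[where x=i and P="\<lambda>i. Ep (k - c i) (q i) = 0", OF z assms(2)])
qed

lemma Fp_rec:
  assumes A: "finite A" and c: "\<And>i. i \<in> A \<Longrightarrow> c i < k"
  shows "Lf (Fp k A q c) = 1 + (\<Sum>i\<in>A. q i * Lf (Fp k A q (c(i := Suc (c i)))))"
proof -
  have "coeff (Fp k A q c) 0 = poly (Fp k A q c) 0" by (simp add: poly_0_coeff_0)
  also have "\<dots> = (\<Prod>i\<in>A. ek (k - c i) 0)" by (simp add: Fp_def poly_prod poly_Ep)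
  also have "\<dots> = 1"
  proof (rule prod.neutral, rule ballI)
    fix i assume "i \<in> A"
    then have "k - c i = Suc (k - Suc (c i))" using c by fastforce
    then show "ek (k - c i) 0 = 1" using ek_at0 by simp
  qed
  finally have 1: "coeff (Fp k A q c) 0 = 1" .
  have "pderiv (Fp k A q c) = (\<Sum>i\<in>A. smult (q i) (Fp k A q (c(i := Suc (c i)))))"
    unfolding Fp_def pderiv_prod
  proof (rule sum.cong[OF refl])
    fix i assume i: "i \<in> A"
    then have ki: "k - c i = Suc (k - Suc (c i))" using c by fastforce
    have "(\<Prod>j\<in>A. Ep (k - (c(i := Suc (c i))) j) (q j))
        = Ep (k - Suc (c i)) (q i) * (\<Prod>j\<in>A - {i}. Ep (k - (c(i := Suc (c i))) j) (q j))"
      by (subst prod.remove[OF A i]) simp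
    also have "(\<Prod>j\<in>A - {i}. Ep (k - (c(i := Suc (c i))) j) (q j)) = (\<Prod>j\<in>A - {i}. Ep (k - c j) (q j))"
      by (rule prod.cong) auto
    finally show "(\<Prod>j\<in>A - {i}. Ep (k - c j) (q j)) * pderiv (Ep (k - c i) (q i)) =
        smult (q i) (\<Prod>j\<in>A. Ep (k - (c(i := Suc (c i))) j) (q j))"
      by (simp add: ki pderiv_Ep mult.commute)
  qed
  then have "Lf (pderiv (Fp k A q c)) = (\<Sum>i\<in>A. q i * Lf (Fp k A q (c(i := Suc (c i)))))"
    by (simp add: Lf_sum Lf_smult)
  then show ?thesis using Lf_pderiv[of "Fp k A q c"] 1 by simp
qed



definition cnt :: "nat stream \<Rightarrow> nat \<Rightarrow> nat \<Rightarrow> nat" where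
  "cnt \<omega> n i = card {j. j < n \<and> \<omega> !! j = i}"

definition Tc :: "nat \<Rightarrow> (nat \<Rightarrow> nat) \<Rightarrow> nat stream \<Rightarrow> nat" where
  "Tc k c \<omega> = (LEAST n. \<exists>i. k \<le> c i + cnt \<omega> n i)"

lemma hit_time_Tc: "hit_time k \<omega> = Tc k (\<lambda>_. 0) \<omega>"
  by (simp add: hit_time_def Tc_def cnt_def)

lemma cnt_Cons: "cnt (x ## \<omega>) (Suc n) i = (if x = i then Suc (cnt \<omega> n i) else cnt \<omega> n i)"
proof -
  have eq: "{j. j < Suc n \<and> (x ## \<omega>) !! j = i} =
      (if x = i then {0} else {}) \<union> Suc ` {j. j < n \<and> \<omega> !! j = i}"
  proof (rule set_eqI)
    fix j show "j \<in> {j. j < Suc n \<and> (x ## \<omega>) !! j = i} \<longleftrightarrow>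
      j \<in> (if x = i then {0} else {}) \<union> Suc ` {j. j < n \<and> \<omega> !! j = i}"
      by (cases j) auto
  qed
  have fin: "finite (Suc ` {j. j < n \<and> \<omega> !! j = i})" by auto
  have "0 \<notin> Suc ` {j. j < n \<and> \<omega> !! j = i}" by auto
  then show ?thesis
    unfolding cnt_def eq using fin by (auto simp: card_image)
qed

lemma Tc_zero: assumes "k \<le> c i" shows "Tc k c \<omega> = 0"
proof -
  have "\<exists>i. k \<le> c i + cnt \<omega> 0 i" using assms by (auto simp: cnt_def)
  then show ?thesis unfolding Tc_def by (rule Least_eq_0)
qed

lemma Tc_Cons:
  assumes c: "\<And>i. c i < k" and ex: "\<exists>n i. k \<le> c i + cnt (x ## \<omega>) n i"
  shows "Tc k c (x ## \<omega>) = Suc (Tc k (c(x := Suc (c x))) \<omega>)"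
proof -
  obtain n i where ni: "k \<le> c i + cnt (x ## \<omega>) n i" using ex by auto
  have n0: "\<not> (\<exists>i. k \<le> c i + cnt (x ## \<omega>) 0 i)" using c by (auto simp: cnt_def not_le)
  have eq: "(\<exists>i. k \<le> c i + cnt (x ## \<omega>) (Suc m) i) \<longleftrightarrow> (\<exists>i. k \<le> (c(x := Suc (c x))) i + cnt \<omega> m i)"
    for m
    by (auto simp: cnt_Cons split: if_splits)
  have l: "(LEAST n. \<exists>i. k \<le> c i + cnt (x ## \<omega>) n i) =
     Suc (LEAST m. \<exists>i. k \<le> c i + cnt (x ## \<omega>) (Suc m) i)"
    by (rule Least_Suc[of "\<lambda>n. \<exists>i. k \<le> c i + cnt (x ## \<omega>) n i", OF _ n0]) (use ni in blast)
  show ?thesis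
    unfolding Tc_def l eq ..
qed

lemma Tc_exists:
  assumes B: "finite B" "B \<noteq> {}" and om: "\<And>j. \<omega> !! j \<in> B" and k: "k \<ge> 1"
  shows "\<exists>n i. k \<le> c i + cnt \<omega> n i"
proof (rule ccontr)
  assume "\<not> ?thesis"
  then have lt: "\<And>n i. cnt \<omega> n i < k" by (meson le_add2 not_le order_trans)
  let ?n = "card B * k"
  have "(\<Sum>i\<in>B. cnt \<omega> ?n i) = card (\<Union>i\<in>B. {j. j < ?n \<and> \<omega> !! j = i})"
    unfolding cnt_def by (rule card_UN_disjoint[symmetric]) (use B in auto)
  also have "(\<Union>i\<in>B. {j. j < ?n \<and> \<omega> !! j = i}) = {..<?n}" using om by auto
  finally have "(\<Sum>i\<in>B. cnt \<omega> ?n i) = ?n" by simp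
  moreover have "(\<Sum>i\<in>B. cnt \<omega> ?n i) < (\<Sum>i\<in>B. k)"
    by (rule sum_strict_mono) (use B lt in auto)
  ultimately show False by simp
qed

lemma sets_S: "sets (stream_space (measure_pmf p)) = sets (stream_space (count_space UNIV))"
  by (rule sets_stream_space_cong) simp

lemma Tc_meas: "Tc k c \<in> measurable (stream_space (measure_pmf p)) (count_space UNIV)"
proof -
  have m: "(\<lambda>\<omega>. \<exists>i. k \<le> c i + cnt \<omega> n i) \<in> measurable (stream_space (measure_pmf p)) (count_space UNIV)"
    for n
  proof -
    let ?\<Phi> = "\<lambda>xs::nat list. \<exists>i. k \<le> c i + card {j. j < n \<and> xs ! j = i}"
    have eq: "(\<lambda>\<omega>. \<exists>i. k \<le> c i + cnt \<omega> n i) = (\<lambda>\<omega>. ?\<Phi> (stake n \<omega>))"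
    proof (rule ext)
      fix \<omega> :: "nat stream"
      have "{j. j < n \<and> stake n \<omega> ! j = i} = {j. j < n \<and> \<omega> !! j = i}" for i by auto
      then show "(\<exists>i. k \<le> c i + cnt \<omega> n i) = ?\<Phi> (stake n \<omega>)" by (simp add: cnt_def)
    qed
    have "(\<lambda>\<omega>. ?\<Phi> (stake n \<omega>)) \<in> measurable (stream_space (count_space UNIV)) (count_space UNIV)"
      by (rule measurable_compose[OF measurable_stake]) simp
    then show ?thesis unfolding eq using measurable_cong_sets[OF sets_S refl] by blast
  qed
  show ?thesis unfolding Tc_def by (rule measurable_Least) (rule m)
qed

lemma Tc_meas_enn: "(\<lambda>\<omega>. ennreal (real (Tc k c \<omega>))) \<in> borel_measurable (stream_space (measure_pmf p))"
  by (rule measurable_compose[OF Tc_meas]) simp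

lemma Tc_meas_real: "(\<lambda>\<omega>. real (Tc k c \<omega>)) \<in> borel_measurable (stream_space (measure_pmf p))"
  by (rule measurable_compose[OF Tc_meas]) simp

lemma AE_set_pmf_stream:
  "AE \<omega> in stream_space (measure_pmf p). \<forall>j. \<omega> !! j \<in> set_pmf p"
proof -
  have "AE \<omega> in stream_space (measure_pmf p). stream_all (\<lambda>x. x \<in> set_pmf p) \<omega>"
    by (rule prob_space.AE_stream_all[OF prob_space_measure_pmf]) (auto simp: AE_measure_pmf)
  then show ?thesis by (rule AE_mp) (auto simp: sset_range intro!: AE_I2)
qed



lemma N_rec:
  assumes fin: "finite (set_pmf p)" and k: "k \<ge> 1" and c: "\<And>i. c i < k"
  shows "(\<integral>\<^sup>+\<omega>. ennreal (real (Tc k c \<omega>)) \<partial>stream_space (measure_pmf p)) =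
         1 + (\<Sum>x\<in>set_pmf p. ennreal (pmf p x) *
              (\<integral>\<^sup>+\<omega>. ennreal (real (Tc k (c(x := Suc (c x))) \<omega>)) \<partial>stream_space (measure_pmf p)))"
proof -
  let ?S = "stream_space (measure_pmf p)"
  let ?N = "\<lambda>x. (\<integral>\<^sup>+\<omega>. ennreal (real (Tc k (c(x := Suc (c x))) \<omega>)) \<partial>?S)"
  interpret S: prob_space ?S by (rule prob_space.prob_space_stream_space[OF prob_space_measure_pmf])
  have "(\<integral>\<^sup>+\<omega>. ennreal (real (Tc k c \<omega>)) \<partial>?S) =
      (\<integral>\<^sup>+x. (\<integral>\<^sup>+\<omega>. ennreal (real (Tc k c (x ## \<omega>))) \<partial>?S) \<partial>measure_pmf p)"
    by (rule prob_space.nn_integral_stream_space[OF prob_space_measure_pmf Tc_meas_enn])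
  also have "\<dots> = (\<Sum>x\<in>set_pmf p. (\<integral>\<^sup>+\<omega>. ennreal (real (Tc k c (x ## \<omega>))) \<partial>?S) * pmf p x)"
    by (rule nn_integral_measure_pmf_finite[OF fin]) simp
  also have "\<dots> = (\<Sum>x\<in>set_pmf p. (1 + ?N x) * pmf p x)"
  proof (rule sum.cong[OF refl])
    fix x assume x: "x \<in> set_pmf p"
    have "(\<integral>\<^sup>+\<omega>. ennreal (real (Tc k c (x ## \<omega>))) \<partial>?S) =
        (\<integral>\<^sup>+\<omega>. 1 + ennreal (real (Tc k (c(x := Suc (c x))) \<omega>)) \<partial>?S)"
    proof (rule nn_integral_cong_AE)
      show "AE \<omega> in ?S. ennreal (real (Tc k c (x ## \<omega>))) = 1 + ennreal (real (Tc k (c(x := Suc (c x))) \<omega>))"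
        using AE_set_pmf_stream[of p]
      proof (rule AE_mp, intro AE_I2 impI)
        fix \<omega> assume om: "\<forall>j. \<omega> !! j \<in> set_pmf p"
        have "\<exists>n i. k \<le> c i + cnt (x ## \<omega>) n i"
          by (rule Tc_exists[OF fin set_pmf_not_empty _ k])
             (use om x in \<open>auto simp: Stream_snth split: nat.splits\<close>)
        then have "Tc k c (x ## \<omega>) = Suc (Tc k (c(x := Suc (c x))) \<omega>)" by (rule Tc_Cons[OF c])
        then show "ennreal (real (Tc k c (x ## \<omega>))) = 1 + ennreal (real (Tc k (c(x := Suc (c x))) \<omega>))"
          by (simp add: ennreal_plus add.commute)
      qed
    qed
    also have "\<dots> = 1 + ?N x"
      by (subst nn_integral_add) (auto simp: Tc_meas_enn S.emeasure_space_1)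
    finally show "(\<integral>\<^sup>+\<omega>. ennreal (real (Tc k c (x ## \<omega>))) \<partial>?S) * pmf p x = (1 + ?N x) * pmf p x"
      by simp
  qed
  also have "\<dots> = (\<Sum>x\<in>set_pmf p. ennreal (pmf p x) + ennreal (pmf p x) * ?N x)"
    by (rule sum.cong) (auto simp: distrib_right distrib_left mult.commute)
  also have "\<dots> = (\<Sum>x\<in>set_pmf p. ennreal (pmf p x)) + (\<Sum>x\<in>set_pmf p. ennreal (pmf p x) * ?N x)"
    by (rule sum.distrib)
  also have "(\<Sum>x\<in>set_pmf p. ennreal (pmf p x)) = 1"
    using sum_pmf_eq_1[OF fin subset_refl] by (simp add: sum_ennreal)
  finally show ?thesis .
qed

lemma N_eq:
  assumes A: "finite A" "set_pmf p \<subseteq> A" and k: "k \<ge> 1"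
  shows "(\<forall>i. i \<notin> A \<longrightarrow> c i = 0) \<Longrightarrow>
    (\<integral>\<^sup>+\<omega>. ennreal (real (Tc k c \<omega>)) \<partial>stream_space (measure_pmf p)) = ennreal (Lf (Fp k A (pmf p) c))
    \<and> 0 \<le> Lf (Fp k A (pmf p) c)"
proof (induction c rule: measure_induct_rule[where f="\<lambda>c. \<Sum>i\<in>A. (k - c i)"])
  case (less c)
  let ?S = "stream_space (measure_pmf p)"
  let ?L = "\<lambda>x. Lf (Fp k A (pmf p) (c(x := Suc (c x))))"
  let ?N = "\<lambda>x. (\<integral>\<^sup>+\<omega>. ennreal (real (Tc k (c(x := Suc (c x))) \<omega>)) \<partial>?S)"
  show ?case
  proof (cases "\<exists>i\<in>A. k \<le> c i")
    case True
    then obtain i where i: "i \<in> A" "k \<le> c i" by auto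
    then have "Fp k A (pmf p) c = 0" by (intro Fp_zero[OF A(1)])
    moreover have "\<And>\<omega>. Tc k c \<omega> = 0" using Tc_zero i by blast
    ultimately show ?thesis by simp
  next
    case False
    then have cA: "\<And>i. i \<in> A \<Longrightarrow> c i < k" by auto
    have c: "c i < k" for i using cA less.prems k by (cases "i \<in> A") auto
    have fin: "finite (set_pmf p)" using A finite_subset by auto
    have IH: "?N x = ennreal (?L x) \<and> 0 \<le> ?L x" if x: "x \<in> set_pmf p" for x
    proof -
      have xA: "x \<in> A" using A x by auto
      show ?thesis
      proof (rule less.IH)
        show "(\<Sum>i\<in>A. k - (c(x := Suc (c x))) i) < (\<Sum>i\<in>A. k - c i)"
        proof (rule sum_strict_mono_ex1[OF A(1)])
          have "k - Suc (c x) < k - c x" using cA[OF xA] by simp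
          then show "\<exists>a\<in>A. k - (c(x := Suc (c x))) a < k - c a" using xA by auto
        qed auto
        show "\<forall>i. i \<notin> A \<longrightarrow> (c(x := Suc (c x))) i = 0" using less.prems xA by auto
      qed
    qed
    have "(\<integral>\<^sup>+\<omega>. ennreal (real (Tc k c \<omega>)) \<partial>?S) = 1 + (\<Sum>x\<in>set_pmf p. ennreal (pmf p x) * ?N x)"
      by (rule N_rec[OF fin k c])
    also have "\<dots> = 1 + (\<Sum>x\<in>set_pmf p. ennreal (pmf p x * ?L x))"
      using IH by (auto intro!: sum.cong simp: ennreal_mult)
    also have "\<dots> = ennreal (1 + (\<Sum>x\<in>set_pmf p. pmf p x * ?L x))"
      using IH by (simp add: ennreal_plus sum_ennreal sum_nonneg)
    also have "(\<Sum>x\<in>set_pmf p. pmf p x * ?L x) = (\<Sum>x\<in>A. pmf p x * ?L x)"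
      by (rule sum.mono_neutral_left[OF A(1) A(2)]) (auto simp: set_pmf_iff)
    also have "1 + (\<Sum>x\<in>A. pmf p x * ?L x) = Lf (Fp k A (pmf p) c)"
      using Fp_rec[OF A(1) cA] by simp
    finally have 1: "(\<integral>\<^sup>+\<omega>. ennreal (real (Tc k c \<omega>)) \<partial>?S) = ennreal (Lf (Fp k A (pmf p) c))" .
    have "(\<Sum>x\<in>A. pmf p x * ?L x) = (\<Sum>x\<in>set_pmf p. pmf p x * ?L x)"
      by (rule sum.mono_neutral_left[OF A(1) A(2), symmetric]) (auto simp: set_pmf_iff)
    also have "\<dots> \<ge> 0" using IH by (auto intro!: sum_nonneg)
    finally have "0 \<le> Lf (Fp k A (pmf p) c)" using Fp_rec[OF A(1) cA] by simp
    with 1 show ?thesis by simp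
  qed
qed

lemma expected_hit_time_Lf:
  assumes A: "finite A" "set_pmf p \<subseteq> A" and k: "k \<ge> 1"
  shows "expected_hit_time k p = Lf (Fp k A (pmf p) (\<lambda>_. 0))"
    "0 \<le> Lf (Fp k A (pmf p) (\<lambda>_. 0))"
proof -
  have N: "(\<integral>\<^sup>+\<omega>. ennreal (real (Tc k (\<lambda>_. 0) \<omega>)) \<partial>stream_space (measure_pmf p)) = ennreal (Lf (Fp k A (pmf p) (\<lambda>_. 0)))"
    and nn: "0 \<le> Lf (Fp k A (pmf p) (\<lambda>_. 0))"
    using N_eq[OF A k, of "\<lambda>_. 0"] by auto
  have "expected_hit_time k p = (\<integral>\<omega>. real (Tc k (\<lambda>_. 0) \<omega>) \<partial>stream_space (measure_pmf p))"
    by (simp add: expected_hit_time_def hit_time_Tc)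
  also have "\<dots> = enn2real (\<integral>\<^sup>+\<omega>. ennreal (real (Tc k (\<lambda>_. 0) \<omega>)) \<partial>stream_space (measure_pmf p))"
    by (rule integral_eq_nn_integral) (auto simp: Tc_meas_real)
  also have "\<dots> = Lf (Fp k A (pmf p) (\<lambda>_. 0))" using N nn by simp
  finally show "expected_hit_time k p = Lf (Fp k A (pmf p) (\<lambda>_. 0))" .
  show "0 \<le> Lf (Fp k A (pmf p) (\<lambda>_. 0))" by (rule nn)
qed



definition Ion :: "(real \<Rightarrow> real) \<Rightarrow> ennreal" where
  "Ion f = (\<integral>\<^sup>+t. ennreal (f t) * indicator {0..} t \<partial>lborel)"

lemma ek_meas [measurable]: "ek n \<in> borel_measurable borel"
  unfolding ek_def by measurable

lemma QQ_meas [measurable]: "QQ n \<in> borel_measurable borel"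
  unfolding QQ_def by measurable

lemma Ion_mono: "(\<And>t. t \<ge> 0 \<Longrightarrow> f t \<le> g t) \<Longrightarrow> Ion f \<le> Ion g"
  unfolding Ion_def by (intro nn_integral_mono) (auto simp: indicator_def ennreal_leI)

lemma Ion_cong: "(\<And>t. t \<ge> 0 \<Longrightarrow> f t = g t) \<Longrightarrow> Ion f = Ion g"
  unfolding Ion_def by (intro nn_integral_cong) (auto simp: indicator_def)

lemma Ion_scale:
  assumes [measurable]: "f \<in> borel_measurable borel" and s: "s > 0"
  shows "Ion (\<lambda>u. f (u / s)) = ennreal s * Ion f"
proof -
  have "Ion f = ennreal \<bar>1/s\<bar> * (\<integral>\<^sup>+x. ennreal (f (0 + 1/s * x)) * indicator {0..} (0 + 1/s * x) \<partial>lborel)"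
    unfolding Ion_def
    by (rule nn_integral_real_affine[where c="1/s" and t=0, of "\<lambda>t. ennreal (f t) * indicator {0..} t"])
       (use s in auto)
  also have "(\<integral>\<^sup>+x. ennreal (f (0 + 1/s * x)) * indicator {0..} (0 + 1/s * x) \<partial>lborel) = Ion (\<lambda>u. f (u / s))"
    unfolding Ion_def using s
    by (intro nn_integral_cong) (auto simp: indicator_def zero_le_divide_iff)
  finally have "Ion f = ennreal (1/s) * Ion (\<lambda>u. f (u / s))" using s by simp
  then have "ennreal s * Ion f = (ennreal s * ennreal (1/s)) * Ion (\<lambda>u. f (u / s))"
    by (simp add: mult.assoc)
  also have "ennreal s * ennreal (1/s) = 1" using s by (simp add: ennreal_mult[symmetric])
  finally show ?thesis by simp
qed

lemma Ion_poly:
  assumes P: "nncoeff P"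
  shows "Ion (\<lambda>t. exp (- t) * poly P t) = ennreal (Lf P)"
proof -
  let ?D = "degree P"
  have eq: "ennreal (exp (- t) * poly P t) * indicator {0..} t =
      (\<Sum>i\<le>?D. ennreal (coeff P i) * (ennreal (t ^ i * exp (- t)) * indicator {0..} t))" for t
  proof (cases "t \<ge> 0")
    case True
    have "exp (- t) * poly P t = (\<Sum>i\<le>?D. coeff P i * (t ^ i * exp (- t)))"
      by (simp add: poly_altdef sum_distrib_left mult_ac)
    then have "ennreal (exp (- t) * poly P t) = (\<Sum>i\<le>?D. ennreal (coeff P i * (t ^ i * exp (- t))))"
      using P True by (subst sum_ennreal) (auto simp: nncoeff_def)
    then show ?thesis using True P by (simp add: ennreal_mult nncoeff_def)
  qed simp
  have "Ion (\<lambda>t. exp (- t) * poly P t) =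
      (\<Sum>i\<le>?D. ennreal (coeff P i) * (\<integral>\<^sup>+t. ennreal (t ^ i * exp (- t)) * indicator {0..} t \<partial>lborel))"
    unfolding Ion_def eq
    by (subst nn_integral_sum) (auto simp: nn_integral_cmult)
  also have "\<dots> = (\<Sum>i\<le>?D. ennreal (coeff P i) * ennreal (fact i))"
    by (simp add: nn_intergal_power_times_exp_Ici)
  also have "\<dots> = (\<Sum>i\<le>?D. ennreal (coeff P i * fact i))"
    using P by (intro sum.cong refl) (simp add: ennreal_mult nncoeff_def)
  also have "\<dots> = ennreal (Lf P)"
    using P unfolding Lf_def by (intro sum_ennreal) (simp add: nncoeff_def)
  finally show ?thesis .
qed

lemma Lf_monom: "Lf (monom a j) = a * fact j"
proof -
  have "Lf (monom a j) = (\<Sum>i\<le>j. coeff (monom a j) i * fact i)"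
    by (rule Lf_bound) (simp add: degree_monom_le)
  also have "\<dots> = (\<Sum>i\<in>{j}. coeff (monom a j) i * fact i)"
    by (rule sum.mono_neutral_right) (auto simp: coeff_monom)
  also have "\<dots> = a * fact j" by simp
  finally show ?thesis .
qed

lemma Ion_QQ: "Ion (QQ k) = ennreal (real k)"
proof -
  have "Ion (QQ k) = Ion (\<lambda>t. exp (- t) * poly (Ep k 1) t)"
    by (rule Ion_cong) (simp add: QQ_def poly_Ep)
  also have "\<dots> = ennreal (Lf (Ep k 1))" by (rule Ion_poly[OF nncoeff_Ep]) simp
  also have "Lf (Ep k 1) = real k" by (simp add: Ep_def Lf_sum Lf_monom)
  finally show ?thesis .
qed

lemma prod_QQ:
  assumes A: "finite A" and q: "sum q A = 1"
  shows "(\<Prod>i\<in>A. QQ k (q i * t)) = exp (- t) * poly (Fp k A q (\<lambda>_. 0)) t"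
proof -
  have "(\<Prod>i\<in>A. QQ k (q i * t)) = (\<Prod>i\<in>A. exp (- (q i * t))) * (\<Prod>i\<in>A. ek k (q i * t))"
    by (simp add: QQ_def prod.distrib)
  also have "(\<Prod>i\<in>A. exp (- (q i * t))) = exp (- (\<Sum>i\<in>A. q i * t))"
    using exp_sum[OF A, of "\<lambda>i. - (q i * t)"] by (simp add: sum_negf)
  also have "(\<Sum>i\<in>A. q i * t) = t" using q by (simp add: sum_distrib_right[symmetric])
  also have "(\<Prod>i\<in>A. ek k (q i * t)) = poly (Fp k A q (\<lambda>_. 0)) t"
    by (simp add: Fp_def poly_prod poly_Ep)
  finally show ?thesis .
qed

lemma nncoeff_Fp: "(\<And>i. i \<in> A \<Longrightarrow> q i \<ge> 0) \<Longrightarrow> nncoeff (Fp k A q c)"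
  unfolding Fp_def by (intro nncoeff_prod nncoeff_Ep) auto

lemma Ion_expected:
  assumes m: "set_pmf p \<subseteq> {1..m}" and k: "k \<ge> 1"
  shows "Ion (\<lambda>t. \<Prod>i\<in>{1..m}. QQ k (pmf p i * t)) = ennreal (expected_hit_time k p)"
proof -
  have s1: "sum (pmf p) {1..m} = 1" by (rule sum_pmf_eq_1[OF _ m]) simp
  have "Ion (\<lambda>t. \<Prod>i\<in>{1..m}. QQ k (pmf p i * t)) = Ion (\<lambda>t. exp (- t) * poly (Fp k {1..m} (pmf p) (\<lambda>_. 0)) t)"
    by (rule Ion_cong) (rule prod_QQ[OF _ s1], simp)
  also have "\<dots> = ennreal (Lf (Fp k {1..m} (pmf p) (\<lambda>_. 0)))"
    by (rule Ion_poly[OF nncoeff_Fp]) simp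
  also have "Lf (Fp k {1..m} (pmf p) (\<lambda>_. 0)) = expected_hit_time k p"
    using expected_hit_time_Lf(1)[OF _ m k] by simp
  finally show ?thesis .
qed



lemma Ion_lim:
  assumes [measurable]: "f \<in> borel_measurable borel" and nn: "\<And>x. x \<ge> 0 \<Longrightarrow> f x \<ge> 0"
    and inc: "incseq b" and ev: "\<And>x. x \<ge> 0 \<Longrightarrow> \<exists>N. \<forall>n\<ge>N. x \<le> b n"
  shows "(\<lambda>n. \<integral>\<^sup>+x. ennreal (f x * indicator {0..b n} x) \<partial>lborel) \<longlonglongrightarrow> Ion f"
  unfolding Ion_def
proof (rule nn_integral_LIMSEQ)
  show "incseq (\<lambda>n x. ennreal (f x * indicator {0..b n} x))"
  proof (rule incseq_SucI, rule le_funI)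
    fix n x
    have "b n \<le> b (Suc n)" using inc by (simp add: incseq_SucD)
    then show "ennreal (f x * indicator {0..b n} x) \<le> ennreal (f x * indicator {0..b (Suc n)} x)"
      using nn[of x] by (auto simp: indicator_def intro!: ennreal_leI)
  qed
  show "(\<lambda>n x. ennreal (f x * indicator {0..b n} x)) n \<in> borel_measurable lborel" for n
    by measurable
  fix x
  show "(\<lambda>n. ennreal (f x * indicator {0..b n} x)) \<longlonglongrightarrow> ennreal (f x) * indicator {0..} x"
  proof (cases "x \<ge> 0")
    case True
    obtain N where N: "\<forall>n\<ge>N. x \<le> b n" using ev[OF True] by auto
    show ?thesis
      by (rule tendsto_eventually, rule eventually_sequentiallyI[of N]) (use N True in auto)
  qed simp
qed

lemma Ion_cong_pos: "(\<And>t. t > 0 \<Longrightarrow> f t = g t) \<Longrightarrow> Ion f = Ion g"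
  unfolding Ion_def
  by (rule nn_integral_cong_AE, rule AE_mp[OF AE_lborel_singleton[of 0]]) 
     (auto simp: indicator_def intro!: AE_I2)

lemma Ion_cmult:
  assumes [measurable]: "f \<in> borel_measurable borel" and "a \<ge> 0"
  shows "Ion (\<lambda>t. a * f t) = ennreal a * Ion f"
  unfolding Ion_def using assms
  by (subst nn_integral_cmult[symmetric]) (auto simp: ennreal_mult' mult.assoc intro!: nn_integral_cong)

lemma key_alg:
  assumes kr: "k = Suc r" and x: "x > 0"
  shows "(x ^ k / fact k) powr (1 / real k - 1) * (x ^ r / fact r) = real k * fact k powr (- 1 / real k)"
proof -
  have fk: "(fact k :: real) > 0" by simp
  have "(x ^ k / fact k) powr (1 / real k - 1) = (x ^ k) powr (1 / real k - 1) / (fact k) powr (1 / real k - 1)"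
    using x by (simp add: powr_divide)
  also have "(x ^ k) powr (1 / real k - 1) = x powr (- real r)"
  proof -
    have "(x ^ k) powr (1 / real k - 1) = (x powr real k) powr (1 / real k - 1)"
      using x by (simp add: powr_realpow)
    also have "\<dots> = x powr (real k * (1 / real k - 1))" by (simp add: powr_powr)
    also have "real k * (1 / real k - 1) = - real r" using kr by (simp add: field_simps)
    finally show ?thesis .
  qed
  also have "(fact k :: real) powr (1 / real k - 1) = fact k powr (1 / real k) / fact k"
    using fk by (simp add: powr_diff)
  finally have 1: "(x ^ k / fact k) powr (1 / real k - 1) = x powr (- real r) * fact k / fact k powr (1 / real k)"
    by simp
  have 2: "x powr (- real r) * x ^ r = 1"
    using x by (simp add: powr_minus powr_realpow)
  have 3: "(fact k :: real) = real k * fact r" using kr by (simp add: fact_Suc)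
  have "(x ^ k / fact k) powr (1 / real k - 1) * (x ^ r / fact r)
      = (x powr (- real r) * x ^ r) * (fact k / fact r) / fact k powr (1 / real k)"
    unfolding 1 by (simp add: field_simps)
  also have "\<dots> = real k / fact k powr (1 / real k)" unfolding 2 3 by simp
  also have "\<dots> = real k * fact k powr (- 1 / real k)"
    by (simp add: powr_minus_divide divide_inverse)
  finally show ?thesis .
qed



lemma Ion_gamma:
  assumes k1: "k \<ge> 1"
  shows "Ion (\<lambda>u. exp (- (u ^ k) / fact k)) = ennreal (fact k powr (1 / real k) * Gamma (1 + 1 / real k))"
proof -
  obtain r where kr: "k = Suc r" using k1 by (cases k) auto
  define F where "F = (\<lambda>s::real. s powr (1 / real k - 1) * exp (- s))"
  define g where "g = (\<lambda>t::real. t ^ k / fact k)"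
  define g' where "g' = (\<lambda>t::real. t ^ r / fact r)"
  define K where "K = real k * fact k powr (- 1 / real k)"
  have Fm[measurable]: "F \<in> borel_measurable borel" unfolding F_def by measurable
  have Fgm[measurable]: "(\<lambda>x. F (g x) * g' x) \<in> borel_measurable borel"
    unfolding F_def g_def g'_def by measurable
  have Fnn: "F x \<ge> 0" if "x \<ge> 0" for x unfolding F_def by simp
  have g0: "g 0 = 0" using kr by (simp add: g_def)
  have sub: "(\<integral>\<^sup>+x. ennreal (F x * indicator {g 0..g b} x) \<partial>lborel) =
             (\<integral>\<^sup>+x. ennreal (F (g x) * g' x * indicator {0..b} x) \<partial>lborel)" if b: "b \<ge> 0" for b
  proof (rule nn_integral_substitution)
    show "set_borel_measurable borel {g 0..g b} F" unfolding set_borel_measurable_def by measurable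
    show "(g has_real_derivative g' x) (at x)" for x
      unfolding g_def g'_def kr by (rule pow_fact_deriv)
    show "continuous_on {0..b} g'" unfolding g'_def by (intro continuous_intros) auto
    show "x \<in> {0..b} \<Longrightarrow> 0 \<le> g' x" for x by (simp add: g'_def)
  qed (use b in auto)
  have ginc: "g x \<le> g y" if "0 \<le> x" "x \<le> y" for x y
    unfolding g_def using that by (intro divide_right_mono power_mono) auto
  have L1: "(\<lambda>n. \<integral>\<^sup>+x. ennreal (F x * indicator {0..g (real n)} x) \<partial>lborel) \<longlonglongrightarrow> Ion F"
  proof (rule Ion_lim[OF Fm Fnn])
    show "incseq (\<lambda>n. g (real n))" by (rule incseq_SucI) (rule ginc, auto)
    fix x :: real assume x: "x \<ge> 0"
    show "\<exists>N. \<forall>n\<ge>N. x \<le> g (real n)"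
    proof (intro exI allI impI)
      fix n assume n: "nat \<lceil>x * fact k\<rceil> + 1 \<le> n"
      then have n1: "real n \<ge> 1" and nx: "real n \<ge> x * fact k" by linarith+
      have "real n \<le> real n ^ k" using n1 k1 by (simp add: self_le_power)
      then have "real n / fact k \<le> g (real n)" unfolding g_def by (simp add: divide_right_mono)
      moreover have "x \<le> real n / fact k" using nx by (simp add: field_simps)
      ultimately show "x \<le> g (real n)" by simp
    qed
  qed (simp_all)
  have L2: "(\<lambda>n. \<integral>\<^sup>+x. ennreal (F (g x) * g' x * indicator {0..real n} x) \<partial>lborel) \<longlonglongrightarrow> Ion (\<lambda>x. F (g x) * g' x)"
  proof (rule Ion_lim[OF Fgm])
    show "x \<ge> 0 \<Longrightarrow> 0 \<le> F (g x) * g' x" for x unfolding F_def g'_def by simp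
    show "incseq (\<lambda>n. real n)" by (simp add: incseq_def)
    fix x :: real assume x: "x \<ge> 0"
    show "\<exists>N. \<forall>n\<ge>N. x \<le> real n"
      by (rule exI[of _ "nat \<lceil>x\<rceil>"]) linarith
  qed
  have "Ion F = Ion (\<lambda>x. F (g x) * g' x)"
    using LIMSEQ_unique[OF L1 L2[unfolded sub[OF of_nat_0_le_iff, symmetric] g0]] .
  also have "\<dots> = Ion (\<lambda>x. K * exp (- (x ^ k) / fact k))"
  proof (rule Ion_cong_pos)
    fix t :: real assume t: "t > 0"
    have "F (g t) * g' t = ((t ^ k / fact k) powr (1 / real k - 1) * (t ^ r / fact r)) * exp (- (t ^ k / fact k))"
      by (simp add: F_def g_def g'_def)
    also have "\<dots> = K * exp (- (t ^ k) / fact k)"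
      unfolding key_alg[OF kr t] K_def by simp
    finally show "F (g t) * g' t = K * exp (- (t ^ k) / fact k)" .
  qed
  also have "\<dots> = ennreal K * Ion (\<lambda>x. exp (- (x ^ k) / fact k))"
    by (rule Ion_cmult) (auto simp: K_def)
  finally have 1: "Ion F = ennreal K * Ion (\<lambda>x. exp (- (x ^ k) / fact k))" .
  have "ennreal (Gamma (1 / real k)) =
      (\<integral>\<^sup>+t. ennreal (indicator {0..} t * t powr (1 / real k - 1) / exp t) \<partial>lborel)"
    by (rule Gamma_conv_nn_integral_real) (use k1 in simp)
  also have "\<dots> = Ion F"
    unfolding Ion_def F_def
    by (intro nn_integral_cong) (auto simp: indicator_def exp_minus divide_inverse)
  finally have "Ion F = ennreal (Gamma (1 / real k))" by simp
  with 1 have 2: "ennreal (Gamma (1 / real k)) = ennreal K * Ion (\<lambda>x. exp (- (x ^ k) / fact k))" by simp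
  have Kp: "K > 0" using k1 by (simp add: K_def)
  have "ennreal (1 / K) * ennreal (Gamma (1 / real k)) = (ennreal (1 / K) * ennreal K) * Ion (\<lambda>x. exp (- (x ^ k) / fact k))"
    unfolding 2 by (simp add: mult.assoc)
  also have "ennreal (1 / K) * ennreal K = 1" using Kp by (simp add: ennreal_mult[symmetric])
  moreover have "ennreal (1 / K) * ennreal (Gamma (1 / real k)) = ennreal (Gamma (1 / real k) / K)"
  proof -
    have Gp: "Gamma (1 / real k) > 0" using k1 by (intro Gamma_real_pos) simp
    then show ?thesis using Kp by (simp add: ennreal_mult[symmetric])
  qed
  ultimately have 3: "Ion (\<lambda>x. exp (- (x ^ k) / fact k)) = ennreal (Gamma (1 / real k) / K)"
    by simp
  have "Gamma (1 / real k) / K = fact k powr (1 / real k) * Gamma (1 + 1 / real k)"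
  proof -
    have np: "1 / real k \<notin> \<int>\<^sub>\<le>\<^sub>0" using k1 by (auto dest: nonpos_Ints_nonpos)
    have h1: "Gamma (1 + 1 / real k) = (1 / real k) * Gamma (1 / real k)"
      using Gamma_plus1[OF np] by (simp add: add.commute)
    have h2: "K = real k / fact k powr (1 / real k)"
      unfolding K_def by (simp add: powr_minus_divide)
    have h3: "fact k powr (1 / real k) > (0::real)" by simp
    have h4: "real k > 0" using k1 by simp
    have alg: "G / K' = P * H" if "H = (1 / kk) * G" "K' = kk / P" "P > 0" "kk > 0"
      for G K' P H kk :: real
    proof -
      have "G = kk * H" using that by simp
      then have "G / K' = (kk * H) / (kk / P)" using that by simp
      also have "\<dots> = P * H" using that by (simp add: field_simps)
      finally show ?thesis .
    qed
    show ?thesis by (rule alg[OF h1 h2 h3 h4])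
  qed
  with 3 show ?thesis by simp
qed



lemma prod_QQ_lower:
  assumes A: "finite A" and w: "\<And>i. i \<in> A \<Longrightarrow> w i \<ge> 0" and sw: "(\<Sum>i\<in>A. w i ^ k) = 1"
    and k: "k \<ge> 1" and u: "u \<ge> 0"
  shows "exp (- (u ^ k) / fact k) \<le> (\<Prod>i\<in>A. QQ k (w i * u))"
proof -
  have "exp (- (u ^ k) / fact k) = exp (\<Sum>i\<in>A. - ((w i * u) ^ k) / fact k)"
  proof -
    have "(\<Sum>i\<in>A. - ((w i * u) ^ k) / fact k) = - (u ^ k * (\<Sum>i\<in>A. w i ^ k)) / fact k"
      by (simp add: power_mult_distrib sum_divide_distrib[symmetric] sum_negf sum_distrib_left mult.commute)
    then show ?thesis using sw by simp
  qed
  also have "\<dots> = (\<Prod>i\<in>A. exp (- ((w i * u) ^ k) / fact k))" by (rule exp_sum[OF A])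
  also have "\<dots> \<le> (\<Prod>i\<in>A. QQ k (w i * u))"
    by (rule prod_mono) (use L1 k w u in auto)
  finally show ?thesis .
qed

lemma prod_QQ_upper:
  assumes A: "finite A" and w: "\<And>i. i \<in> A \<Longrightarrow> w i \<ge> 0" and sw: "(\<Sum>i\<in>A. w i ^ k) = 1"
    and k: "k \<ge> 1" and u: "u \<ge> 0"
  shows "(\<Prod>i\<in>A. QQ k (w i * u)) \<le> QQ k u"
proof -
  have w1: "w i \<le> 1" if i: "i \<in> A" for i
  proof -
    have "w i ^ k \<le> (\<Sum>i\<in>A. w i ^ k)"
      by (rule member_le_sum[OF i]) (use w A in auto)
    then have "w i ^ k \<le> 1" using sw by simp
    then show ?thesis using w[OF i] k by (simp add: power_le_one_iff)
  qed
  have "(\<Prod>i\<in>A. QQ k (w i * u)) \<le> (\<Prod>i\<in>A. QQ k u powr (w i ^ k))"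
    by (rule prod_mono) (use A QQ_U QQ_pos k w w1 u in \<open>auto intro: less_imp_le\<close>)
  also have "\<dots> = QQ k u powr (\<Sum>i\<in>A. w i ^ k)"
    using QQ_pos[OF k u] by (simp add: powr_sum)
  also have "\<dots> = QQ k u" using sw QQ_pos[OF k u] by simp
  finally show ?thesis .
qed

lemma prod_QQ_meas [measurable]: "(\<lambda>t. \<Prod>i\<in>A. QQ k (w i * t)) \<in> borel_measurable borel"
  by measurable

lemma admissible_facts:
  assumes m: "m \<ge> 1" "set_pmf p \<subseteq> {1..m}" and k: "k \<ge> 1"
  defines "s \<equiv> lp_norm k m p"
  shows "s > 0" "(\<Sum>i\<in>{1..m}. (pmf p i / s) ^ k) = 1"
    "ennreal (s * expected_hit_time k p) = Ion (\<lambda>u. \<Prod>i\<in>{1..m}. QQ k (pmf p i / s * u))"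
    "expected_hit_time k p \<ge> 0"
proof -
  let ?S = "\<Sum>i\<in>{1..m}. pmf p i ^ k"
  have s1: "sum (pmf p) {1..m} = 1" by (rule sum_pmf_eq_1[OF _ m(2)]) simp
  have Spos: "?S > 0"
  proof (rule ccontr)
    assume "\<not> ?S > 0"
    then have "?S = 0" by (metis le_less pmf_nonneg sum_nonneg zero_le_power)
    then have "\<forall>i\<in>{1..m}. pmf p i ^ k = 0" by (subst (asm) sum_nonneg_eq_0_iff) auto
    then have "\<forall>i\<in>{1..m}. pmf p i = 0" using k by simp
    then have "sum (pmf p) {1..m} = 0" by simp
    with s1 show False by simp
  qed
  have sdef: "s = ?S powr (1 / real k)" by (simp add: s_def lp_norm_def)
  show sp: "s > 0" using Spos sdef by simp
  have sk: "s ^ k = ?S"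
  proof -
    have "s ^ k = s powr real k" using sp by (simp add: powr_realpow)
    also have "\<dots> = ?S" using Spos k by (simp add: sdef powr_powr)
    finally show ?thesis .
  qed
  show "(\<Sum>i\<in>{1..m}. (pmf p i / s) ^ k) = 1"
    using sk sp Spos by (simp add: power_divide sum_divide_distrib[symmetric])
  have E: "ennreal (expected_hit_time k p) = Ion (\<lambda>t. \<Prod>i\<in>{1..m}. QQ k (pmf p i * t))"
    using Ion_expected[OF m(2) k] by simp
  have "Ion (\<lambda>u. \<Prod>i\<in>{1..m}. QQ k (pmf p i / s * u)) = Ion (\<lambda>u. (\<lambda>t. \<Prod>i\<in>{1..m}. QQ k (pmf p i * t)) (u / s))"
    by (rule Ion_cong) simp
  also have "\<dots> = ennreal s * Ion (\<lambda>t. \<Prod>i\<in>{1..m}. QQ k (pmf p i * t))"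
    by (rule Ion_scale[OF _ sp]) measurable
  also have "\<dots> = ennreal (s * expected_hit_time k p)"
    unfolding E[symmetric] using sp by (simp add: ennreal_mult')
  finally show "ennreal (s * expected_hit_time k p) = Ion (\<lambda>u. \<Prod>i\<in>{1..m}. QQ k (pmf p i / s * u))" ..
  show "expected_hit_time k p \<ge> 0"
    using expected_hit_time_Lf[OF _ m(2) k] by simp
qed

lemma lower_bound:
  assumes m: "m \<ge> 1" "set_pmf p \<subseteq> {1..m}" and k: "k \<ge> 1"
  shows "fact k powr (1 / real k) * Gamma (1 + 1 / real k) \<le> lp_norm k m p * expected_hit_time k p"
proof -
  let ?s = "lp_norm k m p"
  note F = admissible_facts[OF m k]
  have "ennreal (fact k powr (1 / real k) * Gamma (1 + 1 / real k)) = Ion (\<lambda>u. exp (- (u ^ k) / fact k))"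
    using Ion_gamma[OF k] by simp
  also have "\<dots> \<le> Ion (\<lambda>u. \<Prod>i\<in>{1..m}. QQ k (pmf p i / ?s * u))"
    by (rule Ion_mono, rule prod_QQ_lower[OF _ _ F(2) k]) (use F(1) in auto)
  also have "\<dots> = ennreal (?s * expected_hit_time k p)" using F(3) by simp
  finally show ?thesis using F(1,4) by (subst (asm) ennreal_le_iff) auto
qed

lemma upper_bound:
  assumes m: "m \<ge> 1" "set_pmf p \<subseteq> {1..m}" and k: "k \<ge> 1"
  shows "lp_norm k m p * expected_hit_time k p \<le> real k"
proof -
  let ?s = "lp_norm k m p"
  note F = admissible_facts[OF m k]
  have "ennreal (?s * expected_hit_time k p) = Ion (\<lambda>u. \<Prod>i\<in>{1..m}. QQ k (pmf p i / ?s * u))"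
    using F(3) by simp
  also have "\<dots> \<le> Ion (QQ k)"
    by (rule Ion_mono, rule prod_QQ_upper[OF _ _ F(2) k]) (use F(1) in auto)
  also have "\<dots> = ennreal (real k)" by (rule Ion_QQ)
  finally show ?thesis by (subst (asm) ennreal_le_iff) auto
qed



lemma uniform_value:
  assumes m: "m \<ge> 1" and k: "k \<ge> 1"
  shows "ennreal (lp_norm k m (pmf_of_set {1..m}) * expected_hit_time k (pmf_of_set {1..m})) =
         Ion (\<lambda>u. QQ k (root k (1 / real m) * u) ^ m)"
    "set_pmf (pmf_of_set {1..m}) \<subseteq> {1..m}"
proof -
  let ?p = "pmf_of_set {1..m}"
  have ne: "{1..m} \<noteq> {}" using m by auto
  show sp: "set_pmf ?p \<subseteq> {1..m}" using ne by simp
  note F = admissible_facts[OF m sp k]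
  let ?s = "lp_norm k m ?p"
  define w where "w = 1 / real m / ?s"
  have pi: "pmf ?p i / ?s = w" if "i \<in> {1..m}" for i
    using that ne by (simp add: w_def)
  have "(\<Sum>i\<in>{1..m}. (pmf ?p i / ?s) ^ k) = real m * w ^ k"
    using pi by simp
  then have wk: "w ^ k = 1 / real m" using F(2) m by (simp add: field_simps)
  have w0: "w \<ge> 0" using F(1) by (simp add: w_def)
  have wr: "root k (1 / real m) = w" by (rule real_root_pos_unique) (use k w0 wk in auto)
  have "(\<Prod>i\<in>{1..m}. QQ k (pmf ?p i / ?s * u)) = QQ k (w * u) ^ m" for u
  proof -
    have "(\<Prod>i\<in>{1..m}. QQ k (pmf ?p i / ?s * u)) = (\<Prod>i\<in>{1..m}. QQ k (w * u))"
      by (rule prod.cong[OF refl]) (subst pi, assumption, rule refl)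
    then show ?thesis by simp
  qed
  then have "Ion (\<lambda>u. \<Prod>i\<in>{1..m}. QQ k (pmf ?p i / ?s * u)) = Ion (\<lambda>u. QQ k (w * u) ^ m)"
    by simp
  then show "ennreal (?s * expected_hit_time k ?p) = Ion (\<lambda>u. QQ k (root k (1 / real m) * u) ^ m)"
    using F(3) wr by simp
qed

lemma unif_limit:
  assumes k: "k \<ge> 1"
  shows "(\<lambda>n. Ion (\<lambda>u. QQ k (root k (1 / real (Suc n)) * u) ^ Suc n)) \<longlonglongrightarrow> Ion (\<lambda>u. exp (- (u ^ k) / fact k))"
  unfolding Ion_def
proof (rule nn_integral_dominated_convergence[where w="\<lambda>u. ennreal (QQ k u) * indicator {0..} u"])
  show "(\<lambda>u. ennreal (QQ k (root k (1 / real (Suc n)) * u) ^ Suc n) * indicator {0..} u) \<in> borel_measurable lborel" for n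
    by measurable
  show "(\<lambda>u. ennreal (exp (- (u ^ k) / fact k)) * indicator {0..} u) \<in> borel_measurable lborel"
    by measurable
  show "(\<lambda>u. ennreal (QQ k u) * indicator {0..} u) \<in> borel_measurable lborel" by measurable
  show "(\<integral>\<^sup>+ u. ennreal (QQ k u) * indicator {0..} u \<partial>lborel) < \<infinity>"
    using Ion_QQ[of k] by (simp add: Ion_def)
  have wprops: "0 \<le> root k (1 / real (Suc n))" "root k (1 / real (Suc n)) \<le> 1"
     "real (Suc n) * root k (1 / real (Suc n)) ^ k = 1" for n
    using k by auto
  show "AE u in lborel. ennreal (QQ k (root k (1 / real (Suc n)) * u) ^ Suc n) * indicator {0..} u
          \<le> ennreal (QQ k u) * indicator {0..} u" for n
  proof (rule AE_I2)
    fix u :: real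
    show "ennreal (QQ k (root k (1 / real (Suc n)) * u) ^ Suc n) * indicator {0..} u \<le> ennreal (QQ k u) * indicator {0..} u"
    proof (cases "u \<ge> 0")
      case True
      let ?w = "root k (1 / real (Suc n))"
      have "QQ k (?w * u) ^ Suc n \<le> (QQ k u powr (?w ^ k)) ^ Suc n"
        by (rule power_mono[OF QQ_U]) (use k wprops True QQ_pos[of k "?w * u"] in auto)
      also have "\<dots> = QQ k u powr (real (Suc n) * ?w ^ k)"
        by (rule powr_power) (use QQ_pos[OF k True] in simp)
      also have "\<dots> = QQ k u" using wprops(3)[of n] QQ_pos[OF k True] by simp
      finally show ?thesis using True by (simp add: ennreal_leI)
    qed simp
  qed
  show "AE u in lborel. (\<lambda>n. ennreal (QQ k (root k (1 / real (Suc n)) * u) ^ Suc n) * indicator {0..} u)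
      \<longlonglongrightarrow> ennreal (exp (- (u ^ k) / fact k)) * indicator {0..} u"
  proof (rule AE_I2)
    fix u :: real
    show "(\<lambda>n. ennreal (QQ k (root k (1 / real (Suc n)) * u) ^ Suc n) * indicator {0..} u)
      \<longlonglongrightarrow> ennreal (exp (- (u ^ k) / fact k)) * indicator {0..} u"
    proof (cases "u \<ge> 0")
      case True
      define w where "w = (\<lambda>n. root k (1 / real (Suc n)))"
      have wt: "w \<longlonglongrightarrow> 0"
      proof -
        have "(\<lambda>n. 1 / real (Suc n)) \<longlonglongrightarrow> 0" by (rule LIMSEQ_Suc, rule lim_const_over_n)
        from isCont_tendsto_compose[OF isCont_real_root[where n=k and x=0] this] show ?thesis
          by (simp add: w_def)
      qed
      have Et: "(\<lambda>n. ek k (w n * u)) \<longlonglongrightarrow> 1"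
      proof -
        have "(\<lambda>n. w n * u) \<longlonglongrightarrow> 0" using tendsto_mult[OF wt tendsto_const[of u]] by simp
        moreover have "isCont (ek k) 0" using ek_cont continuous_on_eq_continuous_at by blast
        ultimately have "(\<lambda>n. ek k (w n * u)) \<longlonglongrightarrow> ek k 0" by (rule isCont_tendsto_compose[rotated])
        moreover have "ek k 0 = 1" using ek_at0[of "k - 1"] k by simp
        ultimately show ?thesis by simp
      qed
      have up_lim: "(\<lambda>n. exp (- (u ^ k) / (fact k * ek k (w n * u)))) \<longlonglongrightarrow> exp (- (u ^ k) / (fact k * 1))"
        by (intro tendsto_intros Et) simp
      have lower: "exp (- (u ^ k) / fact k) \<le> QQ k (w n * u) ^ Suc n" for n
      proof -
        have wu: "w n * u \<ge> 0" using wprops True by (simp add: w_def)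
        have "exp (- (u ^ k) / fact k) = exp (- ((w n * u) ^ k) / fact k) ^ Suc n"
        proof -
          have "real (Suc n) * (- ((w n * u) ^ k) / fact k) = - (u ^ k) / fact k"
            using wprops(3)[of n] by (simp add: w_def power_mult_distrib field_simps)
          then show ?thesis by (metis exp_of_nat_mult)
        qed
        also have "\<dots> \<le> QQ k (w n * u) ^ Suc n"
          by (rule power_mono[OF L1[OF k wu]]) simp
        finally show ?thesis .
      qed
      have upper: "QQ k (w n * u) ^ Suc n \<le> exp (- (u ^ k) / (fact k * ek k (w n * u)))" for n
      proof -
        have wu: "w n * u \<ge> 0" using wprops True by (simp add: w_def)
        have "QQ k (w n * u) ^ Suc n \<le> exp (- ((w n * u) ^ k) / (fact k * ek k (w n * u))) ^ Suc n"
          by (rule power_mono[OF QQ_Up[OF k wu]]) (use QQ_pos[OF k wu] in simp)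
        also have "\<dots> = exp (- (u ^ k) / (fact k * ek k (w n * u)))"
        proof -
          have "real (Suc n) * (- ((w n * u) ^ k) / (fact k * ek k (w n * u))) = - (u ^ k) / (fact k * ek k (w n * u))"
            using wprops(3)[of n] by (simp add: w_def power_mult_distrib field_simps)
          then show ?thesis by (metis exp_of_nat_mult)
        qed
        finally show ?thesis .
      qed
      have up_lim': "(\<lambda>n. exp (- (u ^ k) / (fact k * ek k (w n * u)))) \<longlonglongrightarrow> exp (- (u ^ k) / fact k)"
        using up_lim by simp
      have "(\<lambda>n. QQ k (w n * u) ^ Suc n) \<longlonglongrightarrow> exp (- (u ^ k) / fact k)"
        by (rule tendsto_sandwich[OF _ _ tendsto_const up_lim'])
           (use lower upper in \<open>auto intro: always_eventually\<close>)
      then have "(\<lambda>n. ennreal (QQ k (w n * u) ^ Suc n)) \<longlonglongrightarrow> ennreal (exp (- (u ^ k) / fact k))"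
        by (rule tendsto_ennrealI)
      then show ?thesis using True by (simp add: w_def)
    qed simp
  qed
qed



lemma unif_value_lim:
  assumes k: "k \<ge> 1"
  shows "(\<lambda>n. lp_norm k (Suc n) (pmf_of_set {1..Suc n}) * expected_hit_time k (pmf_of_set {1..Suc n}))
     \<longlonglongrightarrow> fact k powr (1 / real k) * Gamma (1 + 1 / real k)"
proof (rule tendsto_ennrealD)
  let ?V = "\<lambda>n. lp_norm k (Suc n) (pmf_of_set {1..Suc n}) * expected_hit_time k (pmf_of_set {1..Suc n})"
  have "(\<lambda>n. ennreal (?V n)) = (\<lambda>n. Ion (\<lambda>u. QQ k (root k (1 / real (Suc n)) * u) ^ Suc n))"
    using uniform_value(1)[of "Suc _" k] k by auto
  then show "(\<lambda>n. ennreal (?V n)) \<longlonglongrightarrow> ennreal (fact k powr (1 / real k) * Gamma (1 + 1 / real k))"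
    using unif_limit[OF k] Ion_gamma[OF k] by simp
  show "\<forall>\<^sub>F n in sequentially. 0 \<le> ?V n"
  proof (rule always_eventually, rule allI)
    fix n
    have sp: "set_pmf (pmf_of_set {1..Suc n}) \<subseteq> {1..Suc n}" using uniform_value(2)[of "Suc n" k] k by simp
    have "lp_norm k (Suc n) (pmf_of_set {1..Suc n}) > 0" "expected_hit_time k (pmf_of_set {1..Suc n}) \<ge> 0"
      using admissible_facts(1,4)[OF _ sp k] by auto
    then show "0 \<le> ?V n" by simp
  qed
  show "0 \<le> fact k powr (1 / real k) * Gamma (1 + 1 / real k)"
    by (intro mult_nonneg_nonneg less_imp_le Gamma_real_pos) (auto intro: add_pos_nonneg)
qed

theorem proposition13:
  fixes k :: nat
  assumes "k \<ge> 2"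
  defines "c \<equiv> fact k powr (1 / real k) * Gamma (1 + 1 / real k)"
  shows "((\<lambda>t::real. exp (- (t ^ k) / fact k)) has_integral c) {0..} \<and>
         (\<forall>m p. m \<ge> 1 \<and> set_pmf p \<subseteq> {1..m} \<longrightarrow>
           c \<le> lp_norm k m p * expected_hit_time k p) \<and>
         Inf (admissible_values k) = c \<and>
         (\<forall>m p. m \<ge> 1 \<and> set_pmf p \<subseteq> {1..m} \<longrightarrow>
           lp_norm k m p * expected_hit_time k p \<le> real k) \<and>
         Sup (admissible_values k) = real k"
proof -
  have k1: "k \<ge> 1" using assms by simp
  have c_nn: "c \<ge> 0" unfolding c_def
    by (intro mult_nonneg_nonneg less_imp_le Gamma_real_pos) (auto intro: add_pos_nonneg)
  have I: "((\<lambda>t::real. exp (- (t ^ k) / fact k)) has_integral c) {0..}"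
  proof -
    have "(\<integral>\<^sup>+t. ennreal (indicator {0..} t * exp (- (t ^ k) / fact k)) \<partial>lborel) = ennreal c"
      using Ion_gamma[OF k1] unfolding Ion_def c_def
      by (subst (asm) nn_integral_cong[where v="\<lambda>t. ennreal (indicator {0..} t * exp (- (t ^ k) / fact k))"])
         (auto simp: indicator_def)
    then have h: "((\<lambda>t. indicator {0..} t * exp (- (t ^ k) / fact k)) has_integral c) UNIV"
      by (intro nn_integral_has_integral c_nn) auto
    have eq: "(\<lambda>t. indicator {0..} t * exp (- (t ^ k) / fact k)) =
        (\<lambda>t. if t \<in> {0..} then exp (- (t ^ k) / fact k) else 0)"
      by (auto simp: indicator_def)
    from h have "((\<lambda>t. if t \<in> {0..} then exp (- (t ^ k) / fact k) else 0) has_integral c) UNIV"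
      by (simp only: eq)
    then show ?thesis by (simp only: has_integral_restrict_UNIV)
  qed
  have low: "\<forall>m p. m \<ge> 1 \<and> set_pmf p \<subseteq> {1..m} \<longrightarrow> c \<le> lp_norm k m p * expected_hit_time k p"
    using lower_bound k1 unfolding c_def by blast
  have up: "\<forall>m p. m \<ge> 1 \<and> set_pmf p \<subseteq> {1..m} \<longrightarrow> lp_norm k m p * expected_hit_time k p \<le> real k"
    using upper_bound k1 by blast
  let ?V = "\<lambda>n. lp_norm k (Suc n) (pmf_of_set {1..Suc n}) * expected_hit_time k (pmf_of_set {1..Suc n})"
  have Vin: "?V n \<in> admissible_values k" for n
  proof -
    have sp: "set_pmf (pmf_of_set {1..Suc n}) \<subseteq> {1..Suc n}" using uniform_value(2)[of "Suc n" k] k1 by simp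
    show ?thesis unfolding admissible_values_def mem_Collect_eq
      by (rule exI[of _ "Suc n"], rule exI[of _ "pmf_of_set {1..Suc n}"]) (use sp in simp)
  qed
  have Vlim: "?V \<longlonglongrightarrow> c" unfolding c_def by (rule unif_value_lim[OF k1])
  have Inf: "Inf (admissible_values k) = c"
  proof (rule cInf_eq_non_empty)
    show "admissible_values k \<noteq> {}" using Vin by blast
    show "\<And>x. x \<in> admissible_values k \<Longrightarrow> c \<le> x"
      using low unfolding admissible_values_def by blast
    fix y assume y: "\<And>x. x \<in> admissible_values k \<Longrightarrow> y \<le> x"
    show "y \<le> c"
      by (rule LIMSEQ_le_const[OF Vlim]) (use y Vin in blast)
  qed
  have V0: "?V 0 = real k"
  proof -
    have "ennreal (?V 0) = Ion (\<lambda>u. QQ k (root k (1 / real (Suc 0)) * u) ^ Suc 0)"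
      using uniform_value(1)[of "Suc 0" k] k1 by simp
    also have "\<dots> = Ion (QQ k)" using k1 by simp
    also have "\<dots> = ennreal (real k)" by (rule Ion_QQ)
    finally have "ennreal (?V 0) = ennreal (real k)" .
    moreover have "?V 0 \<ge> 0"
    proof -
      have sp: "set_pmf (pmf_of_set {1..Suc 0}) \<subseteq> {1..Suc 0}" using uniform_value(2)[of "Suc 0" k] k1 by simp
      have "lp_norm k (Suc 0) (pmf_of_set {1..Suc 0}) > 0" "expected_hit_time k (pmf_of_set {1..Suc 0}) \<ge> 0"
        using admissible_facts(1,4)[OF _ sp k1] by auto
      then show ?thesis by simp
    qed
    ultimately show ?thesis by simp
  qed
  have Sup: "Sup (admissible_values k) = real k"
  proof (rule cSup_eq_maximum)
    show "real k \<in> admissible_values k" using Vin[of 0] V0 by simp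
    show "\<And>x. x \<in> admissible_values k \<Longrightarrow> x \<le> real k"
      using up unfolding admissible_values_def by blast
  qed
  show ?thesis using I low Inf up Sup by blast
qed


end
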